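(* Let $(\Omega,\mathcal G,\alpha)$ be a dynamical system and let $\omega\in\Omega$ be a non-isolated point whose orbit $\{\alpha(g)(\omega):g\in\mathcal G\}$ is dense in $\Omega$. Then $\omega$ is pseudoergodic.
   Context: $(\mathcal G,+)$ is a countable discrete group (written additively, not necessarily abelian). A dynamical system $(\Omega,\mathcal G,\alpha)$ consists of a compact metric space $\Omega$ and a map $\alpha$ from $\mathcal G$ to the homeomorphisms of $\Omega$ with $\alpha(g+h)=\alpha(g)\circ\alpha(h)$. A sequence $(g_n)$ satisfies $g_n\to\infty$ if it eventually leaves every finite subset of $\mathcal G$. $L(\omega)=\{\nu\in\Omega:\exists (g_n),\ g_n\to\infty,\ \alpha(g_n)(\omega)\to\nu\}$; $\omega$ is pseudoergodic if $L(\omega)=\Omega$. *)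

theory Defs
  imports "HOL-Analysis.Analysis"
begin

definition dynamical_system ::
  "'m::metric_space set \<Rightarrow> ('g::{group_add,countable} \<Rightarrow> 'm \<Rightarrow> 'm) \<Rightarrow> bool" where
  "dynamical_system \<Omega> \<alpha> \<longleftrightarrow>
     compact \<Omega> \<and>
     (\<forall>g. \<exists>h. homeomorphism \<Omega> \<Omega> (\<alpha> g) h) \<and>
     (\<forall>g h. \<forall>x\<in>\<Omega>. \<alpha> (g + h) x = \<alpha> g (\<alpha> h x))"

definition tends_to_infinity :: "(nat \<Rightarrow> 'g) \<Rightarrow> bool" where
  "tends_to_infinity s \<longleftrightarrow> (\<forall>F. finite F \<longrightarrow> (\<forall>\<^sub>F n in sequentially. s n \<notin> F))"

definition limit_set ::
  "'m::metric_space set \<Rightarrow> ('g \<Rightarrow> 'm \<Rightarrow> 'm) \<Rightarrow> 'm \<Rightarrow> 'm set" where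
  "limit_set \<Omega> \<alpha> \<omega> = {\<nu>\<in>\<Omega>. \<exists>s. tends_to_infinity s \<and> (\<lambda>n. \<alpha> (s n) \<omega>) \<longlonglongrightarrow> \<nu>}"

definition pseudoergodic ::
  "'m::metric_space set \<Rightarrow> ('g \<Rightarrow> 'm \<Rightarrow> 'm) \<Rightarrow> 'm \<Rightarrow> bool" where
  "pseudoergodic \<Omega> \<alpha> \<omega> \<longleftrightarrow> limit_set \<Omega> \<alpha> \<omega> = \<Omega>"

end

theory Submission
  imports Defs
begin

theorem lemma3p5:
  fixes \<Omega> :: "'m::metric_space set"
    and \<alpha> :: "'g::{group_add,countable} \<Rightarrow> 'm \<Rightarrow> 'm"
    and \<omega> :: 'm
  assumes "dynamical_system \<Omega> \<alpha>"
    and "\<omega> \<in> \<Omega>"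
    and "\<omega> islimpt \<Omega>"
    and "closure (range (\<lambda>g. \<alpha> g \<omega>)) = \<Omega>"
  shows "pseudoergodic \<Omega> \<alpha> \<omega>"
proof -
  let ?O = "range (\<lambda>g. \<alpha> g \<omega>)"
  have hom: "\<And>g. \<exists>h. homeomorphism \<Omega> \<Omega> (\<alpha> g) h"
    using assms(1) unfolding dynamical_system_def by blast
  have A: "\<nu> islimpt \<Omega>" if "\<nu> \<in> \<Omega>" for \<nu>
  proof (cases "\<nu> \<in> ?O")
    case False
    have "\<nu> \<in> closure ?O" using that assms(4) by simp
    hence "\<nu> islimpt ?O" using False by (simp add: closure_def)
    moreover have "?O \<subseteq> \<Omega>" using closure_subset[of ?O] assms(4) by simp
    ultimately show ?thesis by (rule islimpt_subset)
  next
    case True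
    then obtain h where nu: "\<nu> = \<alpha> h \<omega>" by auto
    obtain k where hk: "homeomorphism \<Omega> \<Omega> (\<alpha> h) k" using hom by blast
    have inj: "inj_on (\<alpha> h) \<Omega>" using hk
      by (metis homeomorphism_def inj_on_inverseI)
    have cont: "continuous_on \<Omega> (\<alpha> h)" and im: "\<alpha> h ` \<Omega> = \<Omega>"
      using hk by (auto simp: homeomorphism_def)
    show ?thesis unfolding islimpt_eq_acc_point
    proof (intro allI impI)
      fix U assume U: "\<nu> \<in> U" "open U"
      let ?V = "\<Omega> \<inter> \<alpha> h -` U"
      have "openin (top_of_set \<Omega>) ?V"
        using continuous_openin_preimage_gen[OF cont U(2)] by (simp add: Int_commute)
      moreover have "\<omega> \<in> ?V" using U nu assms(2) by auto
      ultimately have "infinite ?V" using infinite_openin assms(3) by blast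
      hence "infinite (\<alpha> h ` ?V)"
        using inj by (meson finite_imageD inf_le1 inj_on_subset)
      moreover have "\<alpha> h ` ?V \<subseteq> U \<inter> \<Omega>" using im by auto
      ultimately show "infinite (U \<inter> \<Omega>)" using finite_subset by blast
    qed
  qed
  have B: "\<exists>g. g \<notin> F \<and> dist (\<alpha> g \<omega>) \<nu> < e"
    if T: "\<nu> \<in> \<Omega>" "e > 0" "finite F" for \<nu> e F
  proof (rule ccontr)
    assume N: "\<not> ?thesis"
    let ?S = "(\<lambda>g. \<alpha> g \<omega>) ` F"
    have "infinite (\<Omega> \<inter> ball \<nu> e)" using A[OF T(1)] T(2)
      by (simp add: islimpt_eq_infinite_ball)
    moreover have "finite ?S" using T(3) by simp
    ultimately have "\<Omega> \<inter> ball \<nu> e - ?S \<noteq> {}"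
      by (metis Diff_eq_empty_iff finite_subset)
    then obtain y where y: "y \<in> \<Omega> \<inter> ball \<nu> e" "y \<notin> ?S" by blast
    have W: "open (ball \<nu> e - ?S)"
      using \<open>finite ?S\<close> by (intro open_Diff) (auto intro: finite_imp_closed)
    have "y \<in> (ball \<nu> e - ?S) \<inter> closure ?O" using y assms(4) by auto
    hence "(ball \<nu> e - ?S) \<inter> ?O \<noteq> {}"
      using open_Int_closure_eq_empty[OF W, of ?O] by blast
    then obtain z where z: "z \<in> ?O" "z \<in> ball \<nu> e - ?S" by blast
    then obtain g where g: "z = \<alpha> g \<omega>" by auto
    have "g \<in> F" using N z g by (auto simp: dist_commute)
    thus False using z g by auto
  qed
  have "\<nu> \<in> limit_set \<Omega> \<alpha> \<omega>" if nu: "\<nu> \<in> \<Omega>" for \<nu>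
  proof -
    define Fn where "Fn n = (from_nat ` {..<n} :: 'g set)" for n
    have "\<forall>n. \<exists>g. g \<notin> Fn n \<and> dist (\<alpha> g \<omega>) \<nu> < 1 / (Suc n)"
      using B[OF nu] by (simp add: Fn_def)
    then obtain s where s: "\<And>n. s n \<notin> Fn n \<and> dist (\<alpha> (s n) \<omega>) \<nu> < 1 / (Suc n)"
      by metis
    have ti: "tends_to_infinity s" unfolding tends_to_infinity_def
    proof (intro allI impI)
      fix F :: "'g set" assume fin: "finite F"
      obtain N where N0: "to_nat ` F \<subseteq> {..<N}"
        using finite_nat_bounded[OF finite_imageI[OF fin]] by blast
      hence N: "\<forall>x\<in>F. to_nat x < N" by auto
      have "F \<subseteq> Fn n" if "n \<ge> N" for n
      proof
        fix x assume "x \<in> F"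
        hence "to_nat x < n" using N that by fastforce
        thus "x \<in> Fn n" unfolding Fn_def by (metis from_nat_to_nat imageI lessThan_iff)
      qed
      thus "\<forall>\<^sub>F n in sequentially. s n \<notin> F"
        using s by (metis eventually_sequentiallyI subsetD)
    qed
    have "(\<lambda>n. \<alpha> (s n) \<omega>) \<longlonglongrightarrow> \<nu>"
    proof (rule metric_LIMSEQ_I)
      fix r :: real assume r: "r > 0"
      obtain N where N: "1 / real (Suc N) < r"
        using r by (metis nat_approx_posE)
      show "\<exists>no. \<forall>n\<ge>no. dist (\<alpha> (s n) \<omega>) \<nu> < r"
      proof (intro exI allI impI)
        fix n assume "n \<ge> N"
        hence "1 / real (Suc n) \<le> 1 / real (Suc N)"
          by (simp add: frac_le)
        thus "dist (\<alpha> (s n) \<omega>) \<nu> < r" using s[of n] N by simp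
      qed
    qed
    thus ?thesis unfolding limit_set_def using ti nu by blast
  qed
  moreover have "limit_set \<Omega> \<alpha> \<omega> \<subseteq> \<Omega>" unfolding limit_set_def by auto
  ultimately show ?thesis unfolding pseudoergodic_def by blast
qed

end
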